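(* For every time step $\Delta t>0$ and every mesh, let $(\phi_h^n,\psi_h^n,s_h^n)_{n\ge0}$ with $\phi_h^n,\psi_h^n\in V_h$, $s_h^n\in\mathbb R$, satisfy, for all $n\ge 0$ and all $v_h\in V_h$, $$\Big(\tfrac{\phi_h^{n+1}-\phi_h^n}{\Delta t},v_h\Big)=-\Big\{\xi^2(\psi_h^{n+1},v_h)-\xi^2(\nabla\psi_h^{n+1},\nabla v_h)+(u(\phi_h^n),v_h)\,s_h^{n+1}\Big\},$$ $$(\psi_h^{n},v_h)=(\phi_h^{n},v_h)-(\nabla\phi_h^{n},\nabla v_h)\quad(\text{for all }n\ge0),$$ $$s_h^{n+1}-s_h^n=\tfrac12\big(u(\phi_h^n),\phi_h^{n+1}-\phi_h^n\big).$$ Then with the modified energy $\tilde{\mathcal E}(\psi,s):=\frac{\xi^2}{2}\|\psi\|^2+s^2$ one has, for all $n\ge0$, $$\tilde{\mathcal E}(\psi_h^{n+1},s_h^{n+1})-\tilde{\mathcal E}(\psi_h^{n},s_h^{n})=-\Big\{\tfrac1{\Delta t}\|\phi_h^{n+1}-\phi_h^n\|^2+\tfrac{\xi^2}{2}\|\psi_h^{n+1}-\psi_h^n\|^2+(s_h^{n+1}-s_h^n)^2\Big\}\le0,$$ i.e. the scheme is unconditionally energy stable with respect to $\tilde{\mathcal E}$.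
   Context: $\Omega\subset\mathbb R^2$ is a bounded convex domain with Lipschitz boundary; $(\cdot,\cdot)$ and $\|\cdot\|$ denote the $L^2(\Omega)$ inner product and norm. $\xi,\alpha,\gamma$ are real parameters, $\mathcal N(\phi)=\frac{\alpha}{2}\phi^2-\frac{\gamma}{6}\phi^3+\frac{1}{24}\phi^4$, $\mathcal E_1(\phi)=\int_\Omega\mathcal N(\phi)\,d\mathbf r$, $D_0$ is a constant with $\mathcal E_1(\phi)+D_0>0$ for the arguments considered, and $u(\phi):=\mathcal N'(\phi)/\sqrt{\mathcal E_1(\phi)+D_0}$. $\mathcal T_h$ is a conforming triangulation of $\Omega$ and $V_h=\{w\in H^1(\Omega): w|_\tau\in P_1(\tau)\ \forall\tau\in\mathcal T_h\}$ is the continuous piecewise linear finite element space. *)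

theory Defs
  imports "HOL-Analysis.Analysis"
begin

type_synonym pt = "real ^ 2"

text \<open>A conforming triangulation of the domain \<Omega>: a finite set of triangles, each given
by its set of three affinely independent vertices; the closed triangles cover the closure of
\<Omega>, and two distinct triangles meet in the convex hull of a set of common vertices
(i.e. in nothing, a common vertex, or a common edge).\<close>
definition conforming_triangulation :: "pt set \<Rightarrow> pt set set \<Rightarrow> bool" where
  "conforming_triangulation \<Omega> T \<longleftrightarrow>
     finite T \<and>
     (\<forall>\<tau>\<in>T. card \<tau> = 3 \<and> \<not> affine_dependent \<tau>) \<and>
     \<Union>((\<lambda>\<tau>. convex hull \<tau>) ` T) = closure \<Omega> \<and>
     (\<forall>\<tau>1\<in>T. \<forall>\<tau>2\<in>T. \<tau>1 \<noteq> \<tau>2 \<longrightarrow>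
        (\<exists>S. S \<subseteq> \<tau>1 \<inter> \<tau>2 \<and> (convex hull \<tau>1) \<inter> (convex hull \<tau>2) = convex hull S))"

text \<open>Continuous piecewise linear finite element space V_h (values outside the closure of
\<Omega> are irrelevant).\<close>
definition Vh :: "pt set \<Rightarrow> pt set set \<Rightarrow> (pt \<Rightarrow> real) set" where
  "Vh \<Omega> T = {w. continuous_on (closure \<Omega>) w \<and>
     (\<forall>\<tau>\<in>T. \<exists>a b. \<forall>x\<in>convex hull \<tau>. w x = a \<bullet> x + b)}"

text \<open>(Classical) gradient; for w in V_h it exists off the (null) set of triangle edges.\<close>
definition grad :: "(pt \<Rightarrow> real) \<Rightarrow> pt \<Rightarrow> pt" where
  "grad w x = (SOME g. (w has_derivative (\<lambda>h. g \<bullet> h)) (at x))"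

definition l2ip :: "pt set \<Rightarrow> (pt \<Rightarrow> real) \<Rightarrow> (pt \<Rightarrow> real) \<Rightarrow> real" where
  "l2ip \<Omega> f g = integral \<Omega> (\<lambda>x. f x * g x)"

definition l2norm :: "pt set \<Rightarrow> (pt \<Rightarrow> real) \<Rightarrow> real" where
  "l2norm \<Omega> f = sqrt (l2ip \<Omega> f f)"

definition l2ip_grad :: "pt set \<Rightarrow> (pt \<Rightarrow> real) \<Rightarrow> (pt \<Rightarrow> real) \<Rightarrow> real" where
  "l2ip_grad \<Omega> f g = integral \<Omega> (\<lambda>x. grad f x \<bullet> grad g x)"

definition Nfun :: "real \<Rightarrow> real \<Rightarrow> real \<Rightarrow> real" where
  "Nfun \<alpha> \<gamma> p = \<alpha> / 2 * p ^ 2 - \<gamma> / 6 * p ^ 3 + 1 / 24 * p ^ 4"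

definition Nderiv :: "real \<Rightarrow> real \<Rightarrow> real \<Rightarrow> real" where
  "Nderiv \<alpha> \<gamma> p = \<alpha> * p - \<gamma> / 2 * p ^ 2 + 1 / 6 * p ^ 3"

definition E1 :: "pt set \<Rightarrow> real \<Rightarrow> real \<Rightarrow> (pt \<Rightarrow> real) \<Rightarrow> real" where
  "E1 \<Omega> \<alpha> \<gamma> \<phi> = integral \<Omega> (\<lambda>x. Nfun \<alpha> \<gamma> (\<phi> x))"

definition ufun :: "pt set \<Rightarrow> real \<Rightarrow> real \<Rightarrow> real \<Rightarrow> (pt \<Rightarrow> real) \<Rightarrow> pt \<Rightarrow> real" where
  "ufun \<Omega> \<alpha> \<gamma> D0 \<phi> = (\<lambda>x. Nderiv \<alpha> \<gamma> (\<phi> x) / sqrt (E1 \<Omega> \<alpha> \<gamma> \<phi> + D0))"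

definition mod_energy :: "pt set \<Rightarrow> real \<Rightarrow> (pt \<Rightarrow> real) \<Rightarrow> real \<Rightarrow> real" where
  "mod_energy \<Omega> \<xi> \<psi> s = \<xi> ^ 2 / 2 * (l2norm \<Omega> \<psi>) ^ 2 + s ^ 2"

end

theory Submission imports Defs begin

lemma Vh_diff:
  assumes "f \<in> Vh \<Omega> T" "g \<in> Vh \<Omega> T"
  shows "(\<lambda>x. f x - g x) \<in> Vh \<Omega> T"
proof -
  have c: "continuous_on (closure \<Omega>) (\<lambda>x. f x - g x)"
    using assms unfolding Vh_def by (intro continuous_on_diff) auto
  have "\<exists>a b. \<forall>x\<in>convex hull \<tau>. f x - g x = a \<bullet> x + b" if "\<tau> \<in> T" for \<tau>
  proof -
    have "\<exists>a b. \<forall>x\<in>convex hull \<tau>. f x = a \<bullet> x + b" using assms(1) that unfolding Vh_def by simp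
    then obtain a1 b1 where 1: "\<forall>x\<in>convex hull \<tau>. f x = a1 \<bullet> x + b1" by blast
    have "\<exists>a b. \<forall>x\<in>convex hull \<tau>. g x = a \<bullet> x + b" using assms(2) that unfolding Vh_def by simp
    then obtain a2 b2 where 2: "\<forall>x\<in>convex hull \<tau>. g x = a2 \<bullet> x + b2" by blast
    have "\<forall>x\<in>convex hull \<tau>. f x - g x = (a1 - a2) \<bullet> x + (b1 - b2)"
      using 1 2 by (simp add: inner_diff_left)
    then show ?thesis by blast
  qed
  then show ?thesis using c unfolding Vh_def by simp
qed

lemma abs_int_bounded_cont:
  fixes h :: "pt \<Rightarrow> real"
  assumes "S \<in> sets lebesgue" "bounded S" "continuous_on S h" "\<And>x. x \<in> S \<Longrightarrow> \<bar>h x\<bar> \<le> M"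
  shows "h integrable_on S"
proof -
  have "S \<in> lmeasurable" using assms by (simp add: bounded_set_imp_lmeasurable)
  then have "(\<lambda>x. M) integrable_on S" by (rule integrable_on_const)
  moreover have "h \<in> borel_measurable (lebesgue_on S)"
    using assms by (simp add: continuous_imp_measurable_on_sets_lebesgue)
  ultimately have "h absolutely_integrable_on S"
    using assms by (intro measurable_bounded_by_integrable_imp_absolutely_integrable) auto
  then show ?thesis using absolutely_integrable_on_def by blast
qed

lemma l2_int:
  assumes "open \<Omega>" "bounded \<Omega>" "f \<in> Vh \<Omega> T" "g \<in> Vh \<Omega> T"
  shows "(\<lambda>x. f x * g x) integrable_on \<Omega>"
proof -
  have c: "continuous_on (closure \<Omega>) (\<lambda>x. f x * g x)"
    using assms by (auto simp: Vh_def intro!: continuous_on_mult)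
  have "compact (closure \<Omega>)" using assms by (simp add: compact_closure)
  then have "bounded ((\<lambda>x. f x * g x) ` closure \<Omega>)"
    using c by (simp add: compact_continuous_image compact_imp_bounded)
  then obtain M where M: "\<And>x. x \<in> closure \<Omega> \<Longrightarrow> \<bar>f x * g x\<bar> \<le> M"
    unfolding bounded_iff by auto
  show ?thesis
  proof (rule abs_int_bounded_cont[where M=M])
    show "\<Omega> \<in> sets lebesgue" using assms lmeasurable_open fmeasurableD by blast
    show "continuous_on \<Omega> (\<lambda>x. f x * g x)" using c closure_subset continuous_on_subset by blast
  qed (use assms M closure_subset in auto)
qed

lemma grad_affine:
  assumes "open U" "x \<in> U" "\<And>y. y \<in> U \<Longrightarrow> f y = a \<bullet> y + b"
  shows "grad f x = a"
proof -
  have "((\<lambda>y. a \<bullet> y + b) has_derivative (\<lambda>h. a \<bullet> h)) (at x)"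
    by (auto intro!: derivative_eq_intros)
  then have d: "(f has_derivative (\<lambda>h. a \<bullet> h)) (at x)"
    by (rule has_derivative_transform_within_open[OF _ assms(1,2)]) (simp add: assms(3))
  then have "\<exists>g. (f has_derivative (\<lambda>h. g \<bullet> h)) (at x)" by blast
  then have "(f has_derivative (\<lambda>h. grad f x \<bullet> h)) (at x)"
    unfolding grad_def by (rule someI_ex)
  from has_derivative_unique[OF this d]
  have "(\<lambda>h. grad f x \<bullet> h) = (\<lambda>h. a \<bullet> h)" .
  then have "grad f x \<bullet> (grad f x - a) = a \<bullet> (grad f x - a)" by metis
  then have "(grad f x - a) \<bullet> (grad f x - a) = 0" by (simp add: inner_diff_left)
  then show ?thesis by simp
qed

lemma grad_lemmas:
  assumes dom: "open \<Omega>" "bounded \<Omega>" and mesh: "conforming_triangulation \<Omega> T"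
    and P: "P \<in> Vh \<Omega> T" and f: "f \<in> Vh \<Omega> T" and g: "g \<in> Vh \<Omega> T"
  shows "(\<lambda>x. grad P x \<bullet> grad f x) integrable_on \<Omega>"
    and "integral \<Omega> (\<lambda>x. grad P x \<bullet> grad (\<lambda>y. f y - g y) x)
         = integral \<Omega> (\<lambda>x. grad P x \<bullet> grad f x) - integral \<Omega> (\<lambda>x. grad P x \<bullet> grad g x)"
proof -
  have finT: "finite T" and cov: "\<Union>((\<lambda>\<tau>. convex hull \<tau>) ` T) = closure \<Omega>"
    and fin3: "\<And>\<tau>. \<tau> \<in> T \<Longrightarrow> finite \<tau>"
    using mesh unfolding conforming_triangulation_def by (auto intro: card_ge_0_finite)
  have aff: "\<exists>A B. \<forall>\<tau>\<in>T. \<forall>x\<in>convex hull \<tau>. h x = A \<tau> \<bullet> x + B \<tau>" if "h \<in> Vh \<Omega> T" for h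
    using that unfolding Vh_def by (auto intro!: bchoice) metis
  define U where "U = (\<Union>\<tau>\<in>T. interior (convex hull \<tau>))"
  define N where "N = (\<Union>\<tau>\<in>T. frontier (convex hull \<tau>))"
  have negN: "negligible N" unfolding N_def
    using finT by (auto intro!: negligible_Union negligible_convex_frontier convex_convex_hull)
  have ON: "x \<in> U" if "x \<in> \<Omega>" "x \<notin> N" for x
  proof -
    from that(1) closure_subset cov obtain \<tau> where t: "\<tau> \<in> T" "x \<in> convex hull \<tau>" by blast
    have "closed (convex hull \<tau>)" using fin3[OF t(1)]
      by (simp add: compact_imp_closed finite_imp_compact_convex_hull)
    then have "x \<in> interior (convex hull \<tau>)" using t that(2) unfolding N_def frontier_def by auto
    with t show ?thesis unfolding U_def by blast
  qed
  have gradval: "grad h x = A \<tau>" if "\<forall>\<tau>\<in>T. \<forall>x\<in>convex hull \<tau>. h x = A \<tau> \<bullet> x + B \<tau>"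
     "\<tau> \<in> T" "x \<in> interior (convex hull \<tau>)" for h A B \<tau> x
    by (rule grad_affine[of "interior (convex hull \<tau>)" _ _ _ "B \<tau>"])
       (use that interior_subset in auto)
  have intg: "(\<lambda>x. grad P x \<bullet> grad h x) integrable_on \<Omega>" if hV: "h \<in> Vh \<Omega> T" for h
  proof -
    obtain A B where AB: "\<forall>\<tau>\<in>T. \<forall>x\<in>convex hull \<tau>. P x = A \<tau> \<bullet> x + B \<tau>" using aff[OF P] by blast
    obtain C D where CD: "\<forall>\<tau>\<in>T. \<forall>x\<in>convex hull \<tau>. h x = C \<tau> \<bullet> x + D \<tau>" using aff[OF hV] by blast
    let ?F = "\<lambda>x. grad P x \<bullet> grad h x"
    have loc: "?F y = A \<tau> \<bullet> C \<tau>" if "\<tau> \<in> T" "y \<in> interior (convex hull \<tau>)" for \<tau> y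
      using gradval[OF AB that] gradval[OF CD that] by simp
    have openU: "open U" unfolding U_def by auto
    have "?F integrable_on (\<Omega> \<inter> U)"
    proof (rule abs_int_bounded_cont[where M="\<Sum>\<tau>\<in>T. \<bar>A \<tau> \<bullet> C \<tau>\<bar>"])
      show "\<Omega> \<inter> U \<in> sets lebesgue" using dom openU
        by (meson bounded_Int lmeasurable_open open_Int fmeasurableD)
      show "bounded (\<Omega> \<inter> U)" using dom by (simp add: bounded_Int)
      show "continuous_on (\<Omega> \<inter> U) ?F"
      proof (subst continuous_on_eq_continuous_at)
        show "open (\<Omega> \<inter> U)" using dom openU by auto
        show "\<forall>x\<in>\<Omega> \<inter> U. isCont ?F x"
        proof
          fix x assume "x \<in> \<Omega> \<inter> U"
          then obtain \<tau> where t: "\<tau> \<in> T" "x \<in> interior (convex hull \<tau>)" unfolding U_def by blast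
          have "continuous_on (interior (convex hull \<tau>)) ?F"
            by (rule continuous_on_eq[OF continuous_on_const]) (use loc t in auto)
          then show "isCont ?F x" using t continuous_on_eq_continuous_at open_interior by blast
        qed
      qed
      show "\<bar>?F x\<bar> \<le> (\<Sum>\<tau>\<in>T. \<bar>A \<tau> \<bullet> C \<tau>\<bar>)" if "x \<in> \<Omega> \<inter> U" for x
      proof -
        from that obtain \<tau> where t: "\<tau> \<in> T" "x \<in> interior (convex hull \<tau>)" unfolding U_def by blast
        have "\<bar>?F x\<bar> = \<bar>A \<tau> \<bullet> C \<tau>\<bar>" using loc t by simp
        also have "\<dots> \<le> (\<Sum>\<tau>\<in>T. \<bar>A \<tau> \<bullet> C \<tau>\<bar>)"
          by (rule member_le_sum) (use t finT in auto)
        finally show ?thesis .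
      qed
    qed
    then show ?thesis
    proof (rule integrable_spike_set)
      show "negligible {x \<in> \<Omega> \<inter> U - \<Omega>. ?F x \<noteq> 0}" 
        by (metis (mono_tags, lifting) Diff_iff IntD1 empty_Collect_eq negligible_empty)
      have "{x \<in> \<Omega> - \<Omega> \<inter> U. ?F x \<noteq> 0} \<subseteq> N" using ON by blast
      then show "negligible {x \<in> \<Omega> - \<Omega> \<inter> U. ?F x \<noteq> 0}" using negN negligible_subset by blast
    qed
  qed
  show "(\<lambda>x. grad P x \<bullet> grad f x) integrable_on \<Omega>" using intg[OF f] .
  obtain A B where AB: "\<forall>\<tau>\<in>T. \<forall>x\<in>convex hull \<tau>. f x = A \<tau> \<bullet> x + B \<tau>" using aff[OF f] by blast
  obtain C D where CD: "\<forall>\<tau>\<in>T. \<forall>x\<in>convex hull \<tau>. g x = C \<tau> \<bullet> x + D \<tau>" using aff[OF g] by blast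
  have AB2: "\<forall>\<tau>\<in>T. \<forall>x\<in>convex hull \<tau>. f x - g x = (A \<tau> - C \<tau>) \<bullet> x + (B \<tau> - D \<tau>)"
    using AB CD by (simp add: inner_diff_left)
  have "integral \<Omega> (\<lambda>x. grad P x \<bullet> grad (\<lambda>y. f y - g y) x)
      = integral \<Omega> (\<lambda>x. grad P x \<bullet> grad f x - grad P x \<bullet> grad g x)"
  proof (rule integral_spike[OF negN])
    fix x assume x: "x \<in> \<Omega> - N"
    then obtain \<tau> where t: "\<tau> \<in> T" "x \<in> interior (convex hull \<tau>)" using ON unfolding U_def by blast
    show "grad P x \<bullet> grad f x - grad P x \<bullet> grad g x = grad P x \<bullet> grad (\<lambda>y. f y - g y) x"
      using gradval[OF AB t] gradval[OF CD t] gradval[OF AB2 t] by (simp add: inner_diff_right)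
  qed
  also have "\<dots> = integral \<Omega> (\<lambda>x. grad P x \<bullet> grad f x) - integral \<Omega> (\<lambda>x. grad P x \<bullet> grad g x)"
    by (rule integral_diff[OF intg[OF f] intg[OF g]])
  finally show "integral \<Omega> (\<lambda>x. grad P x \<bullet> grad (\<lambda>y. f y - g y) x)
         = integral \<Omega> (\<lambda>x. grad P x \<bullet> grad f x) - integral \<Omega> (\<lambda>x. grad P x \<bullet> grad g x)" .
qed
lemma l2ip_comm: "l2ip \<Omega> f g = l2ip \<Omega> g f"
  unfolding l2ip_def by (simp add: mult.commute)

lemma l2ip_grad_comm: "l2ip_grad \<Omega> f g = l2ip_grad \<Omega> g f"
  unfolding l2ip_grad_def by (simp add: inner_commute)

lemma l2ip_diff_right:
  assumes "open \<Omega>" "bounded \<Omega>" "f \<in> Vh \<Omega> T" "g \<in> Vh \<Omega> T" "h \<in> Vh \<Omega> T"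
  shows "l2ip \<Omega> f (\<lambda>x. g x - h x) = l2ip \<Omega> f g - l2ip \<Omega> f h"
proof -
  have "l2ip \<Omega> f (\<lambda>x. g x - h x) = integral \<Omega> (\<lambda>x. f x * g x - f x * h x)"
    unfolding l2ip_def by (simp add: algebra_simps)
  also have "\<dots> = l2ip \<Omega> f g - l2ip \<Omega> f h"
    unfolding l2ip_def by (rule integral_diff) (use l2_int assms in blast)+
  finally show ?thesis .
qed

lemma l2norm_sq:
  assumes "open \<Omega>" "bounded \<Omega>" "f \<in> Vh \<Omega> T"
  shows "(l2norm \<Omega> f)^2 = l2ip \<Omega> f f"
proof -
  have "0 \<le> l2ip \<Omega> f f" unfolding l2ip_def
    by (rule integral_nonneg) (use l2_int[OF assms assms(3)] in auto)
  then show ?thesis unfolding l2norm_def by simp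
qed

theorem theorem3p1:
  fixes \<Omega> :: "pt set" and T :: "pt set set"
    and \<xi> \<alpha> \<gamma> D0 dt :: real
    and phi psi :: "nat \<Rightarrow> pt \<Rightarrow> real" and s :: "nat \<Rightarrow> real"
  assumes dom: "open \<Omega>" "bounded \<Omega>" "convex \<Omega>" "\<Omega> \<noteq> {}"
    and mesh: "conforming_triangulation \<Omega> T"
    and dt: "dt > 0"
    and D0: "\<forall>n. E1 \<Omega> \<alpha> \<gamma> (phi n) + D0 > 0"
    and inV: "\<forall>n. phi n \<in> Vh \<Omega> T \<and> psi n \<in> Vh \<Omega> T"
    and eq1: "\<forall>n. \<forall>v\<in>Vh \<Omega> T.
       l2ip \<Omega> (\<lambda>x. (phi (Suc n) x - phi n x) / dt) v =
       - (\<xi>^2 * l2ip \<Omega> (psi (Suc n)) v - \<xi>^2 * l2ip_grad \<Omega> (psi (Suc n)) v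
          + l2ip \<Omega> (ufun \<Omega> \<alpha> \<gamma> D0 (phi n)) v * s (Suc n))"
    and eq2: "\<forall>n. \<forall>v\<in>Vh \<Omega> T.
       l2ip \<Omega> (psi n) v = l2ip \<Omega> (phi n) v - l2ip_grad \<Omega> (phi n) v"
    and eq3: "\<forall>n. s (Suc n) - s n =
       1/2 * l2ip \<Omega> (ufun \<Omega> \<alpha> \<gamma> D0 (phi n)) (\<lambda>x. phi (Suc n) x - phi n x)"
  shows "\<forall>n.
     mod_energy \<Omega> \<xi> (psi (Suc n)) (s (Suc n)) - mod_energy \<Omega> \<xi> (psi n) (s n) =
       - (1 / dt * (l2norm \<Omega> (\<lambda>x. phi (Suc n) x - phi n x))^2
          + \<xi>^2 / 2 * (l2norm \<Omega> (\<lambda>x. psi (Suc n) x - psi n x))^2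
          + (s (Suc n) - s n)^2)
     \<and> mod_energy \<Omega> \<xi> (psi (Suc n)) (s (Suc n)) - mod_energy \<Omega> \<xi> (psi n) (s n) \<le> 0"
proof
  fix n
  define F' where "F' = phi (Suc n)"
  define F where "F = phi n"
  define P where "P = psi (Suc n)"
  define Q where "Q = psi n"
  define a where "a = (\<lambda>x. F' x - F x)"
  define b where "b = (\<lambda>x. P x - Q x)"
  define u where "u = ufun \<Omega> \<alpha> \<gamma> D0 (phi n)"
  define s' where "s' = s (Suc n)"
  define s0 where "s0 = s n"
  define X where "X = \<xi>^2"
  let ?I = "l2ip \<Omega>" and ?G = "l2ip_grad \<Omega>"
  have V: "F' \<in> Vh \<Omega> T" "F \<in> Vh \<Omega> T" "P \<in> Vh \<Omega> T" "Q \<in> Vh \<Omega> T"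
    using inV unfolding F'_def F_def P_def Q_def by auto
  have aV: "a \<in> Vh \<Omega> T" unfolding a_def by (rule Vh_diff[OF V(1,2)])
  have bV: "b \<in> Vh \<Omega> T" unfolding b_def by (rule Vh_diff[OF V(3,4)])
  have e1: "?I (\<lambda>x. a x / dt) a = - (X * ?I P a - X * ?G P a + ?I u a * s')"
    using eq1 aV unfolding a_def F'_def F_def P_def u_def s'_def X_def by blast
  have "?I (\<lambda>x. a x / dt) a = ?I a a / dt"
    unfolding l2ip_def by (simp add: mult.commute)
  with e1 have e1': "?I a a / dt = - (X * ?I P a - X * ?G P a + ?I u a * s')" by simp
  have e2a: "?I P P = ?I F' P - ?G F' P"
    using eq2 V(3) unfolding P_def F'_def by blast
  have e2b: "?I Q P = ?I F P - ?G F P"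
    using eq2 V(3) unfolding Q_def F_def P_def by blast
  have e3: "s' - s0 = 1/2 * ?I u a"
    using eq3 unfolding s'_def s0_def u_def a_def F'_def F_def by blast
  have L1: "?I P a = ?I P F' - ?I P F" unfolding a_def by (rule l2ip_diff_right[OF dom(1,2) V(3,1,2)])
  have L2: "?G P a = ?G P F' - ?G P F"
    using grad_lemmas(2)[OF dom(1,2) mesh V(3,1,2)] unfolding a_def l2ip_grad_def .
  have L3: "?I P b = ?I P P - ?I P Q" unfolding b_def by (rule l2ip_diff_right[OF dom(1,2) V(3,3,4)])
  have L4: "?I Q b = ?I Q P - ?I Q Q" unfolding b_def by (rule l2ip_diff_right[OF dom(1,2) V(4,3,4)])
  have L5: "?I b b = ?I b P - ?I b Q" unfolding b_def[of] by (rule l2ip_diff_right[OF dom(1,2) bV[unfolded b_def] V(3,4)])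
  have C: "?I F' P = ?I P F'" "?I F P = ?I P F" "?G F' P = ?G P F'" "?G F P = ?G P F"
     "?I Q P = ?I P Q" "?I b P = ?I P b" "?I b Q = ?I Q b"
    by (simp_all add: l2ip_comm[of \<Omega>] l2ip_grad_comm[of \<Omega>])
  have N1: "(l2norm \<Omega> a)^2 = ?I a a" by (rule l2norm_sq[OF dom(1,2) aV])
  have N2: "(l2norm \<Omega> b)^2 = ?I b b" by (rule l2norm_sq[OF dom(1,2) bV])
  have N3: "(l2norm \<Omega> P)^2 = ?I P P" by (rule l2norm_sq[OF dom(1,2) V(3)])
  have N4: "(l2norm \<Omega> Q)^2 = ?I Q Q" by (rule l2norm_sq[OF dom(1,2) V(4)])
  have key: "?I P a - ?G P a = ?I P P - ?I P Q"
    using e2a e2b L1 L2 C by linarith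
  have aa: "?I a a / dt = - X * (?I P P - ?I P Q) - 2 * (s' - s0) * s'"
  proof -
    have h1: "X * ?I P a - X * ?G P a = X * (?I P P - ?I P Q)" using key by (metis right_diff_distrib)
    have h3: "?I u a * s' = 2 * (s' - s0) * s'" using e3 by simp
    show ?thesis using e1' h1 h3 by linarith
  qed
  have bb: "?I b b = ?I P P - 2 * ?I P Q + ?I Q Q"
    using L3 L4 L5 C by linarith
  have dd: "1 / dt * ?I a a = - X * (?I P P - ?I P Q) - 2 * (s' - s0) * s'"
    using aa by simp
  have E: "mod_energy \<Omega> \<xi> P s' - mod_energy \<Omega> \<xi> Q s0 =
       - (1 / dt * (l2norm \<Omega> a)^2 + X / 2 * (l2norm \<Omega> b)^2 + (s' - s0)^2)"
    unfolding mod_energy_def N1 N2 N3 N4 X_def[symmetric] bb dd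
    by (simp add: power2_eq_square algebra_simps)
  have nn: "0 \<le> 1 / dt * (l2norm \<Omega> a)^2 + X / 2 * (l2norm \<Omega> b)^2 + (s' - s0)^2"
    using dt unfolding X_def by (intro add_nonneg_nonneg mult_nonneg_nonneg) auto
  show "mod_energy \<Omega> \<xi> (psi (Suc n)) (s (Suc n)) - mod_energy \<Omega> \<xi> (psi n) (s n) =
       - (1 / dt * (l2norm \<Omega> (\<lambda>x. phi (Suc n) x - phi n x))^2
          + \<xi>^2 / 2 * (l2norm \<Omega> (\<lambda>x. psi (Suc n) x - psi n x))^2
          + (s (Suc n) - s n)^2)
     \<and> mod_energy \<Omega> \<xi> (psi (Suc n)) (s (Suc n)) - mod_energy \<Omega> \<xi> (psi n) (s n) \<le> 0"
    using E nn unfolding a_def b_def F'_def F_def P_def Q_def s'_def s0_def X_def by simp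
qed

end
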